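(* Let $\mathcal C$ be a sub-$\sigma$-algebra of $\mathcal F$, let $G(y;\omega)$ be a regular conditional distribution function of $X_1$ given $\mathcal C$ (so $G(\cdot;\omega)$ is a distribution function for each $\omega$ and $G(y;\cdot)=P(X_1\le y\mid\mathcal C)$ a.s.), and let $g(y)=P(\{\omega:G(y;\omega)=1\})$, $y\in\mathbb{R}$. If $g(\xi_p)<p$, then there exist $\delta,\varepsilon\in(0,1)$ such that for all $t\in\mathbb{R}$, $$\sup_{|y-\xi_p|\le\delta}E\big|E\{\exp(\iota tI(X_1\le y))\mid\mathcal C\}\big|\le1-(1-|\Psi_\varepsilon(t)|)\delta,$$ where $\Psi_a(t)=ae^{\iota t}+1-a$ for $a\in(0,1)$.
   Context: $X_1$ is a real random variable on $(\Omega,\mathcal F,P)$ with distribution function $F$; $p\in(0,1)$, $\xi_p=F^{-1}(p)=\inf\{x:F(x)\ge p\}$, and $F$ is continuous at $\xi_p$ (so $F(\xi_p)=p$). $\iota=\sqrt{-1}$, and $I(\cdot)$ denotes the indicator function. *)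

theory Defs
  imports "HOL-Probability.Probability"
begin

definition complex_cond_exp :: "'a measure \<Rightarrow> 'a measure \<Rightarrow> ('a \<Rightarrow> complex) \<Rightarrow> 'a \<Rightarrow> complex" where
  "complex_cond_exp M F f = (\<lambda>\<omega>. Complex (real_cond_exp M F (\<lambda>x. Re (f x)) \<omega>)
                                              (real_cond_exp M F (\<lambda>x. Im (f x)) \<omega>))"

definition Psi :: "real \<Rightarrow> real \<Rightarrow> complex" where
  "Psi a t = complex_of_real a * exp (\<i> * complex_of_real t) + 1 - complex_of_real a"

end

theory Submission
  imports Defs
begin

lemma Psi_Re: "Re (Psi a t) = a * cos t + 1 - a"
  by (simp add: Psi_def cis_conv_exp[symmetric])

lemma Psi_Im: "Im (Psi a t) = a * sin t"
  by (simp add: Psi_def cis_conv_exp[symmetric])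

lemma Psi_sq: "(cmod (Psi a t))^2 = 1 - 2*a*(1-a)*(1 - cos t)"
proof -
  have "(cmod (Psi a t))^2 = (a * cos t + 1 - a)^2 + (a * sin t)^2"
    by (simp add: cmod_power2 Psi_Re Psi_Im)
  also have "\<dots> = 1 - 2*a*(1-a)*(1 - cos t)"
  proof -
    have s: "(sin t)^2 = 1 - (cos t)^2" by (simp add: sin_squared_eq)
    show ?thesis by (simp add: power_mult_distrib s) (simp add: algebra_simps power2_eq_square)
  qed
  finally show ?thesis .
qed

lemma Psi_le1: assumes "0 \<le> a" "a \<le> 1" shows "cmod (Psi a t) \<le> 1"
proof (rule power2_le_imp_le)
  have "0 \<le> a*(1-a)" using assms by simp
  moreover have "0 \<le> 1 - cos t" by simp
  ultimately have "0 \<le> 2*a*(1-a)*(1 - cos t)" by simp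
  then show "(cmod (Psi a t))^2 \<le> 1^2" by (simp add: Psi_sq)
qed simp

lemma Psi_mono: assumes "e \<le> a" "a \<le> 1 - e" shows "cmod (Psi a t) \<le> cmod (Psi e t)"
proof (rule power2_le_imp_le)
  have "e*(1-e) \<le> a*(1-a)"
  proof -
    have "0 \<le> (a-e)*(1-a-e)" using assms by simp
    then show ?thesis by (simp add: algebra_simps)
  qed
  moreover have "0 \<le> 1 - cos t" by simp
  ultimately have "2*e*(1-e)*(1 - cos t) \<le> 2*a*(1-a)*(1 - cos t)"
    by (simp add: mult_right_mono)
  then show "(cmod (Psi a t))^2 \<le> (cmod (Psi e t))^2" by (simp add: Psi_sq)
qed simp


theorem lemma3p3:
  fixes M :: "'a measure" and C :: "'a measure"
    and X :: "'a \<Rightarrow> real" and G :: "real \<Rightarrow> 'a \<Rightarrow> real"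
    and F :: "real \<Rightarrow> real" and p \<xi> :: real
  assumes "prob_space M"
    and X_meas: "X \<in> borel_measurable M"
    and F_def: "F = cdf (distr M borel X)"
    and p: "0 < p" "p < 1"
    and xi_def: "\<xi> = Inf {x. F x \<ge> p}"
    and F_cont: "isCont F \<xi>"
    and C_sub: "subalgebra M C"
    and G_mono: "\<And>\<omega>. \<omega> \<in> space M \<Longrightarrow> mono (\<lambda>y. G y \<omega>)"
    and G_rcont: "\<And>\<omega> y. \<omega> \<in> space M \<Longrightarrow> continuous (at_right y) (\<lambda>y. G y \<omega>)"
    and G_bot: "\<And>\<omega>. \<omega> \<in> space M \<Longrightarrow> ((\<lambda>y. G y \<omega>) \<longlongrightarrow> 0) at_bot"
    and G_top: "\<And>\<omega>. \<omega> \<in> space M \<Longrightarrow> ((\<lambda>y. G y \<omega>) \<longlongrightarrow> 1) at_top"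
    and G_meas: "\<And>y. G y \<in> borel_measurable C"
    and G_cond: "\<And>y. AE \<omega> in M. G y \<omega> =
                    real_cond_exp M C (indicator {\<omega>\<in>space M. X \<omega> \<le> y}) \<omega>"
    and g_less: "measure M {\<omega>\<in>space M. G \<xi> \<omega> = 1} < p"
  shows "\<exists>\<delta> \<epsilon>. 0 < \<delta> \<and> \<delta> < 1 \<and> 0 < \<epsilon> \<and> \<epsilon> < 1 \<and>
           (\<forall>t::real.
              (SUP y\<in>{y. \<bar>y - \<xi>\<bar> \<le> \<delta>}.
                 integral\<^sup>L M (\<lambda>\<omega>. cmod (complex_cond_exp M C
                    (\<lambda>x. exp (\<i> * complex_of_real t * (if X x \<le> y then 1 else 0))) \<omega>)))
              \<le> 1 - (1 - cmod (Psi \<epsilon> t)) * \<delta>)"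
proof -
  interpret P: prob_space M by fact
  interpret S: finite_measure_subalgebra M C
    by (simp add: finite_measure_subalgebra_def finite_measure_subalgebra_axioms_def C_sub
        P.finite_measure_axioms)
  have [measurable]: "X \<in> borel_measurable M" by (rule X_meas)
  have Gm[measurable]: "G y \<in> borel_measurable M" for y
    using measurable_from_subalg[OF C_sub G_meas] .
  have Xs[measurable]: "{\<omega>\<in>space M. X \<omega> \<le> y} \<in> sets M" for y by measurable
  have Gmono: "G y \<omega> \<le> G z \<omega>" if "\<omega> \<in> space M" "y \<le> z" for y z \<omega>
    using G_mono[OF that(1)] that(2) by (auto simp: mono_def)
  have G0: "0 \<le> G y \<omega>" if "\<omega> \<in> space M" for y \<omega>
    by (rule tendsto_le[OF trivial_limit_at_bot_linorder tendsto_const G_bot[OF that]])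
       (auto simp: eventually_at_bot_linorder intro!: exI[of _ y] Gmono that)
  have G1: "G y \<omega> \<le> 1" if "\<omega> \<in> space M" for y \<omega>
    by (rule tendsto_le[OF trivial_limit_at_top_linorder G_top[OF that] tendsto_const])
       (auto simp: eventually_at_top_linorder intro!: exI[of _ y] Gmono that)
  have Gint: "integrable M (G y)" for y
    by (rule P.integrable_const_bound[where B=1]) (auto simp: G0 G1 abs_le_iff intro!: AE_I2)
  have Iint: "integrable M (indicator A :: 'a \<Rightarrow> real)" if "A \<in> sets M" for A
    using that by (auto intro!: integrable_real_indicator simp: less_top[symmetric])
  have EG: "integral\<^sup>L M (G y) = F y" for y
  proof -
    have "integral\<^sup>L M (G y) = integral\<^sup>L M (real_cond_exp M C (indicator {\<omega>\<in>space M. X \<omega> \<le> y}))"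
      by (rule integral_cong_AE) (auto simp: G_cond)
    also have "\<dots> = integral\<^sup>L M (indicator {\<omega>\<in>space M. X \<omega> \<le> y} :: 'a \<Rightarrow> real)"
      by (rule S.real_cond_exp_int(2)) (rule Iint[OF Xs])
    also have "\<dots> = measure M {\<omega>\<in>space M. X \<omega> \<le> y}" by (simp add: Int_absorb2)
    also have "\<dots> = F y"
      unfolding F_def cdf_def
      by (subst measure_distr) (auto intro!: arg_cong[where f="measure M"])
    finally show ?thesis .
  qed
  have Fxi: "p \<le> F \<xi>"
  proof -
    interpret D: real_distribution "distr M borel X" by simp
    have Fmono: "F x \<le> F z" if "x \<le> z" for x z
      unfolding F_def using that by (rule D.cdf_nondecreasing)
    have "\<forall>\<^sub>F x in at_top. F x > p"
      using order_tendstoD(1)[OF D.cdf_lim_at_top_prob, of p] p unfolding F_def by simp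
    then obtain x0 where "F x0 > p" by (auto simp: eventually_at_top_linorder)
    hence ne: "{x. F x \<ge> p} \<noteq> {}" by (auto intro!: exI[of _ x0])
    have "\<forall>\<^sub>F x in at_bot. F x < p"
      using order_tendstoD(2)[OF D.cdf_lim_at_bot, of p] p unfolding F_def by simp
    then obtain N where N: "\<And>x. x \<le> N \<Longrightarrow> F x < p" by (auto simp: eventually_at_bot_linorder)
    have bdd: "bdd_below {x. F x \<ge> p}"
      by (rule bdd_belowI[of _ N]) (metis N mem_Collect_eq not_le less_imp_le)
    have "\<forall>\<^sub>F x in at_right \<xi>. p \<le> F x"
      using eventually_at_right_less
    proof (rule eventually_mono)
      fix x assume "\<xi> < x"
      then obtain s where "s \<in> {x. F x \<ge> p}" "s < x"
        using cInf_lessD[OF ne] unfolding xi_def by blast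
      then show "p \<le> F x" using Fmono[of s x] by auto
    qed
    moreover have "(F \<longlongrightarrow> F \<xi>) (at_right \<xi>)"
      using F_cont by (simp add: isCont_def filterlim_at_split)
    ultimately show ?thesis
      by (intro tendsto_lowerbound[of F "F \<xi>" "at_right \<xi>"]) auto
  qed
  have CE: "AE \<omega> in M. complex_cond_exp M C
              (\<lambda>x. exp (\<i> * complex_of_real t * (if X x \<le> y then 1 else 0))) \<omega>
            = Complex (1 + (cos t - 1) * G y \<omega>) (sin t * G y \<omega>)" for t y
  proof -
    define I where "I = (indicator {\<omega>\<in>space M. X \<omega> \<le> y} :: 'a \<Rightarrow> real)"
    have [measurable]: "I \<in> borel_measurable M" unfolding I_def by measurable
    have II: "integrable M I" unfolding I_def by (rule Iint[OF Xs])
    have c1: "AE x in M. real_cond_exp M C (\<lambda>x. 1) x = 1"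
      by (rule S.real_cond_exp_F_meas) auto
    have re: "AE x in M. real_cond_exp M C (\<lambda>x. Re (exp (\<i> * complex_of_real t * (if X x \<le> y then 1 else 0)))) x
               = real_cond_exp M C (\<lambda>x. 1 + (cos t - 1) * I x) x"
      by (rule S.real_cond_exp_cong) (auto simp: I_def Re_exp intro!: AE_I2)
    have re2: "AE x in M. real_cond_exp M C (\<lambda>x. 1 + (cos t - 1) * I x) x
               = real_cond_exp M C (\<lambda>x. 1) x + real_cond_exp M C (\<lambda>x. (cos t - 1) * I x) x"
      by (rule S.real_cond_exp_add) (auto intro: II)
    have re3: "AE x in M. real_cond_exp M C (\<lambda>x. (cos t - 1) * I x) x = (cos t - 1) * real_cond_exp M C I x"
      by (rule S.real_cond_exp_cmult[OF II])
    have im: "AE x in M. real_cond_exp M C (\<lambda>x. Im (exp (\<i> * complex_of_real t * (if X x \<le> y then 1 else 0)))) x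
               = real_cond_exp M C (\<lambda>x. sin t * I x) x"
      by (rule S.real_cond_exp_cong) (auto simp: I_def Im_exp intro!: AE_I2)
    have im2: "AE x in M. real_cond_exp M C (\<lambda>x. sin t * I x) x = sin t * real_cond_exp M C I x"
      by (rule S.real_cond_exp_cmult[OF II])
    show ?thesis using re re2 re3 c1 im im2 G_cond[of y]
      by eventually_elim (simp add: complex_cond_exp_def I_def)
  qed
  define g where "g = measure M {\<omega>\<in>space M. G \<xi> \<omega> = 1}"
  have gp: "g < p" using g_less unfolding g_def .
  define A where "A n = {\<omega>\<in>space M. 1 - 1 / (real n + 1) < G \<xi> \<omega>}" for n :: nat
  have Asets: "A n \<in> sets M" for n unfolding A_def by measurable
  have Adec: "decseq A"
  proof (rule decseq_SucI)
    fix n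
    have "1 / (real (Suc n) + 1) \<le> 1 / (real n + 1)" by (simp add: frac_le)
    then show "A (Suc n) \<subseteq> A n" unfolding A_def by auto
  qed
  have Aint: "(\<Inter>n. A n) = {\<omega>\<in>space M. G \<xi> \<omega> = 1}"
  proof (intro set_eqI iffI)
    fix \<omega> assume w: "\<omega> \<in> (\<Inter>n. A n)"
    hence sp: "\<omega> \<in> space M" by (auto simp: A_def)
    have "G \<xi> \<omega> = 1"
    proof (rule ccontr)
      assume "G \<xi> \<omega> \<noteq> 1"
      hence "0 < 1 - G \<xi> \<omega>" using G1[OF sp, of \<xi>] by simp
      then obtain n where n: "inverse (real (Suc n)) < 1 - G \<xi> \<omega>" using reals_Archimedean by blast
      have "\<omega> \<in> A n" using w by auto
      then show False using n by (auto simp: A_def inverse_eq_divide add.commute)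
    qed
    then show "\<omega> \<in> {\<omega>\<in>space M. G \<xi> \<omega> = 1}" using sp by auto
  next
    fix \<omega> assume "\<omega> \<in> {\<omega>\<in>space M. G \<xi> \<omega> = 1}"
    then show "\<omega> \<in> (\<Inter>n. A n)" by (auto simp: A_def)
  qed
  have Alim: "(\<lambda>n. measure M (A n)) \<longlonglongrightarrow> g"
    using P.finite_Lim_measure_decseq[of A] Asets Adec unfolding Aint g_def by auto
  define \<eta> where "\<eta> = (p - g) / 4"
  have eta: "0 < \<eta>" using gp unfolding \<eta>_def by simp
  obtain N1 where N1: "\<And>n. n \<ge> N1 \<Longrightarrow> measure M (A n) < g + \<eta>"
    using order_tendstoD(2)[OF Alim, of "g + \<eta>"] eta by (auto simp: eventually_sequentially)
  obtain N2 where N2: "inverse (real (Suc N2)) < \<eta>" using reals_Archimedean eta by blast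
  define n where "n = max N1 N2"
  define a where "a = 1 / (real n + 1)"
  have a0: "0 < a" unfolding a_def by simp
  have aeta: "a < \<eta>"
  proof -
    have "a \<le> 1 / (real N2 + 1)" unfolding a_def n_def by (simp add: frac_le)
    then show ?thesis using N2 by (simp add: inverse_eq_divide add.commute)
  qed
  have An: "measure M (A n) < g + \<eta>" using N1 unfolding n_def by simp
  define mid where "mid = {\<omega>\<in>space M. a \<le> G \<xi> \<omega> \<and> G \<xi> \<omega> \<le> 1 - a}"
  have midsets[measurable]: "mid \<in> sets M" unfolding mid_def by measurable
  have Anset[measurable]: "A n \<in> sets M" by (rule Asets)
  have "F \<xi> \<le> a + measure M mid + measure M (A n)"
  proof -
    have "F \<xi> = integral\<^sup>L M (G \<xi>)" by (simp add: EG)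
    also have "\<dots> \<le> integral\<^sup>L M (\<lambda>\<omega>. a + indicator mid \<omega> + indicator (A n) \<omega>)"
    proof (rule integral_mono)
      show "integrable M (G \<xi>)" by (rule Gint)
      show "integrable M (\<lambda>\<omega>. a + indicator mid \<omega> + indicator (A n) \<omega>)"
        using Iint[OF midsets] Iint[OF Anset] by auto
      fix \<omega> assume sp: "\<omega> \<in> space M"
      show "G \<xi> \<omega> \<le> a + indicator mid \<omega> + indicator (A n) \<omega>"
        using G1[OF sp, of \<xi>] a0 sp by (auto simp: mid_def A_def a_def[symmetric] indicator_def)
    qed
    also have "\<dots> = a + measure M mid + measure M (A n)"
      using Iint[OF midsets] Iint[OF Anset]
      by (simp add: Int_absorb2 sets.sets_into_space P.prob_space)
    finally show ?thesis .
  qed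
  hence "p < a + measure M mid + (g + \<eta>)" using Fxi An by linarith
  hence "p < \<eta> + measure M mid + (g + \<eta>)" using aeta by linarith
  hence Pmid: "2 * \<eta> < measure M mid" unfolding \<eta>_def by (simp add: field_simps)
  define \<epsilon> where "\<epsilon> = a / 2"
  have eps: "0 < \<epsilon>" "\<epsilon> < 1" using a0 aeta unfolding \<epsilon>_def a_def by auto
  obtain d where d: "0 < d" "\<And>x. x \<noteq> \<xi> \<and> norm (x - \<xi>) < d \<longrightarrow> norm (F x - F \<xi>) < \<epsilon> * \<eta> / 2"
    using LIM_D[OF F_cont[unfolded isCont_def], of "\<epsilon> * \<eta> / 2"] eps eta by auto
  define \<delta> where "\<delta> = min (d/2) (min \<eta> (1/2))"
  have del: "0 < \<delta>" "\<delta> < 1" "\<delta> \<le> \<eta>" "\<delta> < d" using d eta unfolding \<delta>_def by auto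
  have Fp: "\<bar>F (\<xi> + \<delta>) - F \<xi>\<bar> < \<epsilon> * \<eta> / 2" using d(2)[of "\<xi> + \<delta>"] del by auto
  have Fm: "\<bar>F (\<xi> - \<delta>) - F \<xi>\<bar> < \<epsilon> * \<eta> / 2" using d(2)[of "\<xi> - \<delta>"] del by auto
  define T where "T = {\<omega>\<in>space M. \<epsilon> \<le> G (\<xi> - \<delta>) \<omega> \<and> G (\<xi> + \<delta>) \<omega> \<le> 1 - \<epsilon>}"
  have Tsets[measurable]: "T \<in> sets M" unfolding T_def by measurable
  have "measure M mid \<le> measure M T + (F (\<xi> + \<delta>) - F (\<xi> - \<delta>)) / \<epsilon>"
  proof -
    have "measure M mid = integral\<^sup>L M (indicator mid :: 'a \<Rightarrow> real)"
      by (simp add: Int_absorb2 sets.sets_into_space)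
    also have "\<dots> \<le> integral\<^sup>L M (\<lambda>\<omega>. indicator T \<omega> + (G (\<xi> + \<delta>) \<omega> - G (\<xi> - \<delta>) \<omega>) / \<epsilon>)"
    proof (rule integral_mono)
      show "integrable M (indicator mid :: 'a \<Rightarrow> real)" by (rule Iint[OF midsets])
      show "integrable M (\<lambda>\<omega>. indicator T \<omega> + (G (\<xi> + \<delta>) \<omega> - G (\<xi> - \<delta>) \<omega>) / \<epsilon>)"
        using Iint[OF Tsets] Gint[of "\<xi> + \<delta>"] Gint[of "\<xi> - \<delta>"] by auto
      fix \<omega> assume sp: "\<omega> \<in> space M"
      have L: "G (\<xi> - \<delta>) \<omega> \<le> G \<xi> \<omega>" and U: "G \<xi> \<omega> \<le> G (\<xi> + \<delta>) \<omega>"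
        using Gmono[OF sp] del by auto
      have nn: "0 \<le> (G (\<xi> + \<delta>) \<omega> - G (\<xi> - \<delta>) \<omega>) / \<epsilon>" using L U eps by simp
      show "indicator mid \<omega> \<le> indicator T \<omega> + (G (\<xi> + \<delta>) \<omega> - G (\<xi> - \<delta>) \<omega>) / \<epsilon>"
      proof (cases "\<omega> \<in> mid \<and> \<omega> \<notin> T")
        case True
        then have "\<epsilon> \<le> G (\<xi> + \<delta>) \<omega> - G (\<xi> - \<delta>) \<omega>"
          using L U sp unfolding mid_def T_def \<epsilon>_def by auto
        then have "1 \<le> (G (\<xi> + \<delta>) \<omega> - G (\<xi> - \<delta>) \<omega>) / \<epsilon>" using eps by simp
        then show ?thesis using True by simp
      next
        case False
        then show ?thesis using nn by (auto simp: indicator_def)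
      qed
    qed
    also have "\<dots> = measure M T + (F (\<xi> + \<delta>) - F (\<xi> - \<delta>)) / \<epsilon>"
      using Iint[OF Tsets] Gint[of "\<xi> + \<delta>"] Gint[of "\<xi> - \<delta>"]
      by (simp add: Int_absorb2 sets.sets_into_space EG[symmetric])
    finally show ?thesis .
  qed
  moreover have "(F (\<xi> + \<delta>) - F (\<xi> - \<delta>)) / \<epsilon> < \<eta>"
  proof -
    have "F (\<xi> + \<delta>) - F (\<xi> - \<delta>) < \<epsilon> * \<eta>" using Fp Fm by linarith
    then show ?thesis using eps by (simp add: divide_less_eq mult.commute)
  qed
  ultimately have PT: "\<delta> \<le> measure M T" using Pmid del by linarith
  show ?thesis
  proof (intro exI conjI allI)
    show "0 < \<delta>" "\<delta> < 1" "0 < \<epsilon>" "\<epsilon> < 1" using del eps by auto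
    fix t :: real
    define c where "c = cmod (Psi \<epsilon> t)"
    have c1: "c \<le> 1" unfolding c_def using eps by (intro Psi_le1) auto
    show "(SUP y\<in>{y. \<bar>y - \<xi>\<bar> \<le> \<delta>}.
                 integral\<^sup>L M (\<lambda>\<omega>. cmod (complex_cond_exp M C
                    (\<lambda>x. exp (\<i> * complex_of_real t * (if X x \<le> y then 1 else 0))) \<omega>)))
              \<le> 1 - (1 - cmod (Psi \<epsilon> t)) * \<delta>"
    proof (rule cSUP_least)
      show "{y. \<bar>y - \<xi>\<bar> \<le> \<delta>} \<noteq> {}" using del by (auto intro!: exI[of _ \<xi>])
      fix y assume "y \<in> {y. \<bar>y - \<xi>\<bar> \<le> \<delta>}"
      hence y: "\<xi> - \<delta> \<le> y" "y \<le> \<xi> + \<delta>" by auto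
      have hm[measurable]: "(\<lambda>\<omega>. cmod (Psi (G y \<omega>) t)) \<in> borel_measurable M"
        unfolding Psi_def by measurable
      have "integral\<^sup>L M (\<lambda>\<omega>. cmod (complex_cond_exp M C
                    (\<lambda>x. exp (\<i> * complex_of_real t * (if X x \<le> y then 1 else 0))) \<omega>))
            = integral\<^sup>L M (\<lambda>\<omega>. cmod (Psi (G y \<omega>) t))"
      proof (rule integral_cong_AE)
        show "(\<lambda>\<omega>. cmod (complex_cond_exp M C
                    (\<lambda>x. exp (\<i> * complex_of_real t * (if X x \<le> y then 1 else 0))) \<omega>)) \<in> borel_measurable M"
          unfolding complex_cond_exp_def complex_norm by measurable
        show "(\<lambda>\<omega>. cmod (Psi (G y \<omega>) t)) \<in> borel_measurable M" by (rule hm)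
        show "AE \<omega> in M. cmod (complex_cond_exp M C
                    (\<lambda>x. exp (\<i> * complex_of_real t * (if X x \<le> y then 1 else 0))) \<omega>)
               = cmod (Psi (G y \<omega>) t)"
          using CE[of t y]
        proof eventually_elim
          case (elim \<omega>)
          have "Psi (G y \<omega>) t = Complex (1 + (cos t - 1) * G y \<omega>) (sin t * G y \<omega>)"
            by (simp add: complex_eq_iff Psi_Re Psi_Im algebra_simps)
          then show ?case using elim by simp
        qed
      qed
      also have "\<dots> \<le> integral\<^sup>L M (\<lambda>\<omega>. 1 - (1 - c) * indicator T \<omega>)"
      proof (rule integral_mono)
        show "integrable M (\<lambda>\<omega>. cmod (Psi (G y \<omega>) t))"
          by (rule P.integrable_const_bound[where B=1])
             (auto intro!: AE_I2 Psi_le1 G0 G1)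
        show "integrable M (\<lambda>\<omega>. 1 - (1 - c) * indicator T \<omega>)"
          using Iint[OF Tsets] by auto
        fix \<omega> assume sp: "\<omega> \<in> space M"
        show "cmod (Psi (G y \<omega>) t) \<le> 1 - (1 - c) * indicator T \<omega>"
        proof (cases "\<omega> \<in> T")
          case True
          have "\<epsilon> \<le> G y \<omega>" using True Gmono[OF sp y(1)] unfolding T_def by auto
          moreover have "G y \<omega> \<le> 1 - \<epsilon>" using True Gmono[OF sp y(2)] unfolding T_def by auto
          ultimately show ?thesis using True Psi_mono[of \<epsilon> "G y \<omega>" t] unfolding c_def by simp
        next
          case False
          then show ?thesis using Psi_le1[OF G0[OF sp] G1[OF sp]] by simp
        qed
      qed
      also have "\<dots> = 1 - (1 - c) * measure M T"
        using Iint[OF Tsets] by (simp add: Int_absorb2 sets.sets_into_space P.prob_space)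
      also have "\<dots> \<le> 1 - (1 - c) * \<delta>"
        using PT c1 by (simp add: mult_left_mono)
      finally show "integral\<^sup>L M (\<lambda>\<omega>. cmod (complex_cond_exp M C
                    (\<lambda>x. exp (\<i> * complex_of_real t * (if X x \<le> y then 1 else 0))) \<omega>))
              \<le> 1 - (1 - cmod (Psi \<epsilon> t)) * \<delta>" unfolding c_def .
    qed
  qed
qed

end
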